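(* Let $G=(V,E)$ be a finite simple undirected graph of maximum degree at most $\Delta$, let $M$ be computed by a run of \textsc{MinGreedy} on $G$, and let $M^*$ be a maximum matching such that each component of $(V,M\cup M^* )$ with an edge is a singleton or an $M$-$M^*$-path. Let $\{u,v\}\in M$. If $\{u,v\}$ is a singleton, then $u$ and $v$ together are the source of at most $2(\Delta-1)$ transfers. If $\{u,v\}$ is an edge of an $M$-$M^*$-path, then $u$ and $v$ together are the source of at most $2(\Delta-2)$ transfers.
   Context: \textsc{MinGreedy}: starting with $M=\emptyset$, repeatedly select an arbitrary node $u$ of minimum non-zero current degree and an arbitrary neighbor $v$ of $u$, add $\{u,v\}$ to $M$ and remove all edges incident with $u$ or $v$ from the current graph. A singleton is an edge of $M\cap M^*$ forming a component of $(V,M\cup M^* )$. An $M$-$M^*$-path is a component of $(V,M\cup M^* )$ that is an alternating path starting and ending with an $M^*$-edge, with $m\geq1$ edges of $M$ and $m+1$ edges of $M^*$; its endpoints are its two $M$-uncovered end nodes. Let $F=E\setminus(M\cup M^* )$. For an endpoint $w$ of an $M$-$M^*$-path, an edge $\{v,w\}\in F$ is a transfer from $v$ to $w$ if, in the step of the algorithm in which $v$ is matched, the current degree of $w$ drops to at most $1$ (i.e. after that step $w$ has current degree at most $1$). *)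

theory Defs
  imports Main
begin

definition simple_graph :: "'a set \<Rightarrow> 'a set set \<Rightarrow> bool" where
  "simple_graph V E \<longleftrightarrow> finite V \<and> (\<forall>e\<in>E. \<exists>x y. e = {x, y} \<and> x \<noteq> y \<and> x \<in> V \<and> y \<in> V)"

definition deg :: "'a set set \<Rightarrow> 'a \<Rightarrow> nat" where
  "deg F x = card {e \<in> F. x \<in> e}"

definition matching :: "'a set set \<Rightarrow> 'a set set \<Rightarrow> bool" where
  "matching E M \<longleftrightarrow> M \<subseteq> E \<and> (\<forall>e\<in>M. \<forall>e'\<in>M. e \<noteq> e' \<longrightarrow> e \<inter> e' = {})"

definition maximum_matching :: "'a set set \<Rightarrow> 'a set set \<Rightarrow> bool" where
  "maximum_matching E M \<longleftrightarrow> matching E M \<and> (\<forall>M'. matching E M' \<longrightarrow> card M' \<le> card M)"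

text \<open>A run of MinGreedy is recorded as the list of chosen pairs (u,v), u first.
  cur E steps i is the current edge set before step i (after i steps).\<close>
definition cur :: "'a set set \<Rightarrow> ('a \<times> 'a) list \<Rightarrow> nat \<Rightarrow> 'a set set" where
  "cur E steps i = {e \<in> E. \<forall>j<i. fst (steps ! j) \<notin> e \<and> snd (steps ! j) \<notin> e}"

definition mingreedy_run :: "'a set set \<Rightarrow> ('a \<times> 'a) list \<Rightarrow> bool" where
  "mingreedy_run E steps \<longleftrightarrow>
     (\<forall>i<length steps.
        {fst (steps ! i), snd (steps ! i)} \<in> cur E steps i \<and>
        (\<forall>x. deg (cur E steps i) x > 0 \<longrightarrow> deg (cur E steps i) (fst (steps ! i)) \<le> deg (cur E steps i) x))
     \<and> cur E steps (length steps) = {}"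

definition matching_of :: "('a \<times> 'a) list \<Rightarrow> 'a set set" where
  "matching_of steps = {{u, v} | u v. (u, v) \<in> set steps}"

definition path_edges :: "'a list \<Rightarrow> 'a set set" where
  "path_edges xs = {{xs ! i, xs ! Suc i} | i. Suc i < length xs}"

definition singleton_comp :: "'a set set \<Rightarrow> 'a set set \<Rightarrow> 'a set \<Rightarrow> bool" where
  "singleton_comp M Ms e \<longleftrightarrow> e \<in> M \<inter> Ms \<and> (\<forall>e'\<in>M \<union> Ms. e' \<inter> e \<noteq> {} \<longrightarrow> e' = e)"

definition mm_path :: "'a set set \<Rightarrow> 'a set set \<Rightarrow> 'a list \<Rightarrow> bool" where
  "mm_path M Ms xs \<longleftrightarrow> distinct xs \<and> even (length xs) \<and> length xs \<ge> 4 \<and>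
     (\<forall>i. Suc i < length xs \<longrightarrow>
        (if even i then {xs ! i, xs ! Suc i} \<in> Ms else {xs ! i, xs ! Suc i} \<in> M)) \<and>
     (\<forall>e\<in>M \<union> Ms. e \<inter> set xs \<noteq> {} \<longrightarrow> e \<in> path_edges xs)"

definition path_endpoint :: "'a set set \<Rightarrow> 'a set set \<Rightarrow> 'a \<Rightarrow> bool" where
  "path_endpoint M Ms w \<longleftrightarrow> (\<exists>xs. mm_path M Ms xs \<and> (w = hd xs \<or> w = last xs))"

definition transfer :: "'a set set \<Rightarrow> ('a \<times> 'a) list \<Rightarrow> 'a set set \<Rightarrow> 'a \<Rightarrow> 'a \<Rightarrow> bool" where
  "transfer E steps Ms x w \<longleftrightarrow>
     {x, w} \<in> E - (matching_of steps \<union> Ms) \<and> path_endpoint (matching_of steps) Ms w \<and>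
     (\<exists>i<length steps. (x = fst (steps ! i) \<or> x = snd (steps ! i)) \<and>
        deg (cur E steps (Suc i)) w \<le> 1)"

end

theory Submission
  imports Defs
begin

lemma nbr_bound:
  assumes fin: "finite E" and se: "\<forall>e\<in>E. \<exists>a b. e = {a,b} \<and> a \<noteq> b"
    and B: "B \<subseteq> {e\<in>E. x\<in>e} \<inter> A" and fB: "finite B"
  shows "finite {w. {x,w} \<in> E - A} \<and> card {w. {x,w} \<in> E - A} \<le> deg E x - card B"
proof -
  let ?N = "{w. {x,w} \<in> E - A}"
  have inj: "inj_on (\<lambda>w. {x,w}) ?N"
  proof (rule inj_onI)
    fix w w' assume w: "w \<in> ?N" and "w' \<in> ?N" and eq: "{x,w} = {x,w'}"
    from w se obtain a b where "{x,w} = {a,b}" "a \<noteq> b" by blast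
    hence "x \<noteq> w" by (metis doubleton_eq_iff insert_absorb2)
    with eq show "w = w'" by (metis doubleton_eq_iff)
  qed
  have sub: "(\<lambda>w. {x,w}) ` ?N \<subseteq> {e\<in>E. x\<in>e} - B" using B by auto
  have f2: "finite ({e\<in>E. x\<in>e} - B)" using fin by auto
  have fN: "finite ?N" using finite_imageD[OF finite_subset[OF sub f2] inj] .
  have "card ?N = card ((\<lambda>w. {x,w}) ` ?N)" using card_image[OF inj] by simp
  also have "\<dots> \<le> card ({e\<in>E. x\<in>e} - B)" using card_mono[OF f2 sub] .
  also have "\<dots> = deg E x - card B"
    using B fB by (simp add: deg_def card_Diff_subset)
  finally show ?thesis using fN by simp
qed

lemma run_matching:
  assumes "mingreedy_run E steps" "e \<in> matching_of steps" "e' \<in> matching_of steps" "e \<noteq> e'"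
  shows "e \<inter> e' = {}"
proof -
  have key: "{fst (steps!i), snd (steps!i)} \<inter> {fst (steps!k), snd (steps!k)} = {}"
    if "i < k" "k < length steps" for i k
  proof -
    have "{fst (steps!k), snd (steps!k)} \<in> cur E steps k"
      using assms(1) that unfolding mingreedy_run_def by blast
    thus ?thesis using that unfolding cur_def by auto
  qed
  obtain a b where ab: "(a,b) \<in> set steps" "e = {a,b}" using assms(2) unfolding matching_of_def by blast
  obtain c d where cd: "(c,d) \<in> set steps" "e' = {c,d}" using assms(3) unfolding matching_of_def by blast
  obtain i where i: "i < length steps" "steps!i = (a,b)" using ab(1) by (metis in_set_conv_nth)
  obtain k where k: "k < length steps" "steps!k = (c,d)" using cd(1) by (metis in_set_conv_nth)
  have "i \<noteq> k" using i k ab cd assms(4) by auto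
  then consider "i < k" | "k < i" by linarith
  thus ?thesis
  proof cases
    case 1 thus ?thesis using key[OF 1 k(1)] i k ab cd by simp
  next
    case 2 thus ?thesis using key[OF 2 i(1)] i k ab cd by auto
  qed
qed

lemma run_sub:
  assumes "mingreedy_run E steps" "e \<in> matching_of steps"
  shows "e \<in> E"
proof -
  obtain a b where ab: "(a,b) \<in> set steps" "e = {a,b}" using assms(2) unfolding matching_of_def by blast
  obtain i where i: "i < length steps" "steps!i = (a,b)" using ab(1) by (metis in_set_conv_nth)
  have "{fst (steps!i), snd (steps!i)} \<in> cur E steps i"
    using assms(1) i unfolding mingreedy_run_def by blast
  thus ?thesis using i ab unfolding cur_def by auto
qed

lemma path_other:
  assumes p: "mm_path M Ms xs" and e: "{u,v} \<in> path_edges xs" and uvM: "{u,v} \<in> M"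
    and mat: "\<And>e e'. e \<in> M \<Longrightarrow> e' \<in> M \<Longrightarrow> e \<noteq> e' \<Longrightarrow> e \<inter> e' = {}"
  shows "\<forall>x\<in>{u,v}. \<exists>e\<in>Ms. x \<in> e \<and> e \<noteq> {u,v}"
proof -
  have d: "distinct xs" and ev: "even (length xs)" and l4: "length xs \<ge> 4"
    and alt: "\<And>i. Suc i < length xs \<Longrightarrow>
        (if even i then {xs ! i, xs ! Suc i} \<in> Ms else {xs ! i, xs ! Suc i} \<in> M)"
    using p unfolding mm_path_def by auto
  obtain j where j: "{u,v} = {xs!j, xs!Suc j}" "Suc j < length xs"
    using e unfolding path_edges_def by blast
  have neq: "xs!a \<noteq> xs!b" if "a < length xs" "b < length xs" "a \<noteq> b" for a b
    using d that by (simp add: nth_eq_iff_index_eq)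
  show ?thesis
  proof (cases "even j")
    case True
    show ?thesis
    proof (cases "j = 0")
      case True
      have m: "{xs!1, xs!2} \<in> M" using alt[of 1] l4 by (simp add: numeral_2_eq_2 del: One_nat_def)
      have l: "0 < length xs" "1 < length xs" "2 < length xs" using l4 by auto
      have a1: "xs!2 \<noteq> xs!0" "xs!2 \<noteq> xs!1" using neq[OF l(3) l(1)] neq[OF l(3) l(2)] by auto
      have "xs!2 \<notin> {u,v}" unfolding j(1) using True a1 by simp
      hence "{xs!1, xs!2} \<noteq> {u,v}" by blast
      hence "{xs!1, xs!2} \<inter> {u,v} = {}" using mat m uvM by blast
      moreover have "xs!1 \<in> {u,v}" unfolding j(1) using True by simp
      ultimately show ?thesis by blast
    next
      case False
      define k where "k = j - 1"
      have k: "j = Suc k" "odd k" using False \<open>even j\<close> unfolding k_def by (cases j; simp)+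
      have m: "{xs!k, xs!j} \<in> M" using alt[of k] k j by simp
      have a1: "xs!k \<noteq> xs!Suc j" "xs!k \<noteq> xs!j" using neq[of k "Suc j"] neq[of k j] j(2) k(1) by simp_all
      have "xs!k \<notin> {u,v}" unfolding j(1) using a1 by simp
      hence "{xs!k, xs!j} \<noteq> {u,v}" by blast
      hence "{xs!k, xs!j} \<inter> {u,v} = {}" using mat m uvM by blast
      moreover have "xs!j \<in> {u,v}" unfolding j(1) by simp
      ultimately show ?thesis by blast
    qed
  next
    case False
    define k where "k = j - 1"
    have k: "j = Suc k" "even k" using False unfolding k_def by (cases j; simp)+
    have "Suc (Suc j) < length xs"
    proof (rule ccontr)
      assume "\<not> ?thesis" hence "length xs = Suc (Suc j)" using j by linarith
      thus False using ev False by simp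
    qed
    hence m1: "{xs!Suc j, xs!Suc (Suc j)} \<in> Ms" using alt[of "Suc j"] False by auto
    have m0: "{xs!k, xs!j} \<in> Ms" using alt[of k] k j by simp
    have a1: "xs!j \<noteq> xs!Suc (Suc j)" "xs!Suc j \<noteq> xs!Suc (Suc j)"
      using neq[of j "Suc (Suc j)"] neq[of "Suc j" "Suc (Suc j)"] \<open>Suc (Suc j) < length xs\<close> by auto
    have "xs!Suc (Suc j) \<notin> {u,v}" unfolding j(1) using a1 by simp
    hence n1: "{xs!Suc j, xs!Suc (Suc j)} \<noteq> {u,v}" by blast
    have a2: "xs!k \<noteq> xs!Suc j" "xs!k \<noteq> xs!j" using neq[of k "Suc j"] neq[of k j] j k by auto
    have "xs!k \<notin> {u,v}" unfolding j(1) using a2 by simp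
    hence n0: "{xs!k, xs!j} \<noteq> {u,v}" by blast
    have uv: "u \<in> {xs!j, xs!Suc j}" "v \<in> {xs!j, xs!Suc j}" using j(1) by (metis insertI1 insertI2)+
    show ?thesis
    proof
      fix x assume "x \<in> {u,v}"
      hence "x = xs!j \<or> x = xs!Suc j" using uv by blast
      thus "\<exists>e\<in>Ms. x \<in> e \<and> e \<noteq> {u,v}"
      proof
        assume x: "x = xs!j" show ?thesis using m0 n0 x by (intro bexI[of _ "{xs!k, xs!j}"]) simp_all
      next
        assume x: "x = xs!Suc j" show ?thesis using m1 n1 x by (intro bexI[of _ "{xs!Suc j, xs!Suc (Suc j)}"]) simp_all
      qed
    qed
  qed
qed

theorem lemma4:
  fixes V :: "'a set" and E :: "'a set set" and \<Delta> :: nat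
    and steps :: "('a \<times> 'a) list" and Ms :: "'a set set" and u v :: 'a
  assumes "simple_graph V E"
    and "\<forall>x\<in>V. deg E x \<le> \<Delta>"
    and "mingreedy_run E steps"
    and "maximum_matching E Ms"
    and "\<forall>e\<in>matching_of steps \<union> Ms. singleton_comp (matching_of steps) Ms e \<or>
           (\<exists>xs. mm_path (matching_of steps) Ms xs \<and> e \<in> path_edges xs)"
    and "{u, v} \<in> matching_of steps"
  shows "(singleton_comp (matching_of steps) Ms {u, v} \<longrightarrow>
           card {(x, w). x \<in> {u, v} \<and> transfer E steps Ms x w} \<le> 2 * (\<Delta> - 1)) \<and>
         ((\<exists>xs. mm_path (matching_of steps) Ms xs \<and> {u, v} \<in> path_edges xs) \<longrightarrow>
           card {(x, w). x \<in> {u, v} \<and> transfer E steps Ms x w} \<le> 2 * (\<Delta> - 2))"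
proof -
  let ?M = "matching_of steps"
  let ?A = "?M \<union> Ms"
  let ?S = "{(x, w). x \<in> {u, v} \<and> transfer E steps Ms x w}"
  let ?N = "\<lambda>x. {w. {x,w} \<in> E - ?A}"
  have uvE: "{u,v} \<in> E" using run_sub[OF assms(3,6)] .
  have fV: "finite V" and sg: "\<forall>e\<in>E. \<exists>x y. e = {x, y} \<and> x \<noteq> y \<and> x \<in> V \<and> y \<in> V"
    using assms(1) unfolding simple_graph_def by auto
  have EV: "E \<subseteq> Pow V"
  proof
    fix e assume "e \<in> E"
    then obtain x y where "e = {x, y}" "x \<in> V" "y \<in> V" using sg by meson
    thus "e \<in> Pow V" by simp
  qed
  have fE: "finite E" using finite_subset[OF EV] fV by auto
  have se: "\<forall>e\<in>E. \<exists>a b. e = {a,b} \<and> a \<noteq> b" using sg by meson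
  have uV: "u \<in> V" "v \<in> V" using uvE EV by auto
  have MsE: "Ms \<subseteq> E" using assms(4) unfolding maximum_matching_def matching_def by auto
  have Ssub: "?S \<subseteq> ({u} \<times> ?N u) \<union> ({v} \<times> ?N v)"
    unfolding transfer_def by auto
  have gen: "card ?S \<le> 2 * (\<Delta> - k)"
    if h: "\<And>x. x \<in> {u,v} \<Longrightarrow> \<exists>B. B \<subseteq> {e\<in>E. x\<in>e} \<inter> ?A \<and> finite B \<and> card B = k" for k
  proof -
    have b: "finite (?N x) \<and> card (?N x) \<le> \<Delta> - k" if xin: "x \<in> {u,v}" for x
    proof -
      obtain B where B: "B \<subseteq> {e\<in>E. x\<in>e} \<inter> ?A" "finite B" "card B = k" using h[OF xin] by blast
      have "deg E x \<le> \<Delta>" using assms(2) uV xin by auto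
      thus ?thesis using nbr_bound[OF fE se B(1,2)] B(3) by linarith
    qed
    have fu: "finite ({u} \<times> ?N u)" "finite ({v} \<times> ?N v)" using b by auto
    have "card ?S \<le> card (({u} \<times> ?N u) \<union> ({v} \<times> ?N v))"
      using card_mono[OF _ Ssub] fu by blast
    also have "\<dots> \<le> card ({u} \<times> ?N u) + card ({v} \<times> ?N v)" by (rule card_Un_le)
    also have "\<dots> = card (?N u) + card (?N v)" by (simp add: card_cartesian_product_singleton)
    also have "\<dots> \<le> 2 * (\<Delta> - k)" using b[of u] b[of v] by simp
    finally show ?thesis .
  qed
  have c1: "card ?S \<le> 2 * (\<Delta> - 1)"
    by (rule gen, rule_tac x="{{u,v}}" in exI, use uvE assms(6) in auto)
  have c2: "card ?S \<le> 2 * (\<Delta> - 2)"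
    if ex: "\<exists>xs. mm_path ?M Ms xs \<and> {u, v} \<in> path_edges xs"
  proof -
    obtain xs where xs: "mm_path ?M Ms xs" "{u, v} \<in> path_edges xs" using ex by blast
    have oth: "\<forall>x\<in>{u,v}. \<exists>e\<in>Ms. x \<in> e \<and> e \<noteq> {u,v}"
      using path_other[OF xs assms(6)] run_matching[OF assms(3)] by blast
    show ?thesis
    proof (rule gen)
      fix x assume x: "x \<in> {u,v}"
      then obtain e where e: "e \<in> Ms" "x \<in> e" "e \<noteq> {u,v}" using oth by blast
      show "\<exists>B. B \<subseteq> {e\<in>E. x\<in>e} \<inter> ?A \<and> finite B \<and> card B = 2"
        by (rule exI[of _ "{{u,v}, e}"]) (use e x uvE MsE assms(6) in auto)
    qed
  qed
  show ?thesis using c1 c2 by blast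
qed

end
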